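(* Assume the recursive Laplacians $\mathbf{L}^{(H)}$ and operators $\mathbf{M}^{(H)}$ below, and suppose that for every non-root node $D$, $\widetilde{\mathrm{SC}}(\mathbf{L}^{(D)},\partial D)\approx_{\epsilon}\mathrm{SC}(\mathbf{L}^{(D)},\partial D)$. Then for every node $H$ at level $i$ of $\mathcal{T}$ and every vector $\mathbf{z}$, \[\|\mathbf{M}^{(H)}\mathbf{z}\|_2^2\le e^{i\epsilon}\,\mathbf{z}^\top\mathbf{L}^{(H)}\mathbf{z}=e^{i\epsilon}\,\mathcal{E}_{\mathbf{L}^{(H)}}(\mathbf{L}^{(H)}\mathbf{z}).\]
   Context: Setup. $G=(V,E)$ is a connected undirected graph with positive edge weights, $\mathbf{W}=\mathrm{diag}(\mathbf{w})$, signed incidence matrix $\mathbf{B}\in\mathbb{R}^{E\times V}$; for a region (edge-induced subgraph) $H$, $\mathbf{B}[H]$ is $\mathbf{B}$ with rows of edges not in $E(H)$ set to zero. All matrices/vectors are padded with zeros to $V$- or $E$-indexed dimensions; $\mathbf{M}^{-1}$ is the Moore–Penrose pseudoinverse; $\mathbf{A}\approx_t\mathbf{B}$ means $e^{-t}\mathbf{A}\preceq\mathbf{B}\preceq e^{t}\mathbf{A}$; for a Laplacian $\mathbf{L}$ supported on $U$ and $C\subseteq U$, $F=U\setminus C$, $\mathrm{SC}(\mathbf{L},C)=\mathbf{L}_{C,C}-\mathbf{L}_{C,F}\mathbf{L}_{F,F}^{-1}\mathbf{L}_{F,C}$; energy $\mathcal{E}_{\mathbf{L}}(\mathbf{d})=\mathbf{d}^\top\mathbf{L}^{-1}\mathbf{d}$.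 $\mathcal{T}$ is a separator tree of $G$: a rooted binary tree of regions $H$ with vertex sets $\partial H$, $S(H)$, $F_H$, where the root is $G$ with $\partial G=\emptyset$, $F_G=S(G)$; a non-leaf node $H$ has two children $D_1,D_2$ whose edge sets partition $E(H)$ with $V(D_1)\cap V(D_2)=S(H)$, $\partial D_j=(\partial H\cup S(H))\cap V(D_j)$, $F_H=S(H)\setminus\partial H$; a leaf has constantly many edges, $S(H)=\emptyset$, $F_H=V(H)\setminus\partial H$. The level of a node is the maximum number of edges on a tree path from it down to a descendant (leaves have level 0). Recursive Laplacians. For a leaf $H$, $\mathbf{L}^{(H)}=\mathbf{B}[H]^\top\mathbf{W}\mathbf{B}[H]$. For each node $D$ we are given a Laplacian $\widetilde{\mathrm{SC}}(\mathbf{L}^{(D)},\partial D)$ supported on $\partial D$; for a non-leaf $H$ with children $D_1,D_2$, $\mathbf{L}^{(H)}=\widetilde{\mathrm{SC}}(\mathbf{L}^{(D_1)},\partial D_1)+\widetilde{\mathrm{SC}}(\mathbf{L}^{(D_2)},\partial D_2)$. Assume each $\mathbf{L}^{(H)}$ is the Laplacian of a connected graph on vertex set $\partial H\cup F_H$. Operators. For a node $D$ with parent $P$, the edge operator is $\mathbf{M}_{(D,P)}=(\mathbf{L}^{(D)})^{-1}\widetilde{\mathrm{SC}}(\mathbf{L}^{(D)},\partial D)$. Define $\mathbf{M}^{(H)}=\mathbf{W}^{1/2}\mathbf{B}[H]$ for a leaf $H$, and $\mathbf{M}^{(H)}=\mathbf{M}^{(D_1)}\mathbf{M}_{(D_1,H)}+\mathbf{M}^{(D_2)}\mathbf{M}_{(D_2,H)}$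 for a non-leaf $H$ with children $D_1,D_2$. *)

theory Defs
  imports "HOL-Analysis.Analysis"
begin

text \<open>All vectors/matrices are indexed by the finite types 'v (vertices) and 'e (edges),
  i.e. they are automatically "padded with zeros" to V- or E-indexed dimensions.\<close>

definition loewner_le :: "real^'n^'n \<Rightarrow> real^'n^'n \<Rightarrow> bool" (infix "\<preceq>\<^sub>L" 50) where
  "A \<preceq>\<^sub>L B \<longleftrightarrow> (\<forall>x. x \<bullet> (A *v x) \<le> x \<bullet> (B *v x))"

definition spec_approx :: "real^'n^'n \<Rightarrow> real \<Rightarrow> real^'n^'n \<Rightarrow> bool" where
  "spec_approx A t B \<longleftrightarrow> (exp (- t) *\<^sub>R A \<preceq>\<^sub>L B \<and> B \<preceq>\<^sub>L exp t *\<^sub>R A)"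

definition pinv :: "real^'n^'m \<Rightarrow> real^'m^'n" where
  "pinv A = (THE X. A ** X ** A = A \<and> X ** A ** X = X \<and>
                    transpose (A ** X) = A ** X \<and> transpose (X ** A) = X ** A)"

definition restr :: "real^'n^'m \<Rightarrow> 'm set \<Rightarrow> 'n set \<Rightarrow> real^'n^'m" where
  "restr A R C = (\<chi> i j. if i \<in> R \<and> j \<in> C then A $ i $ j else 0)"

text \<open>Schur complement SC(L,C) of a matrix L supported on U onto C \<subseteq> U, F = U - C:
  L_CC - L_CF L_FF^{-1} L_FC (all blocks zero-padded; the pseudoinverse of the
  zero-padded block L_FF is the zero-padded pseudoinverse of L_FF).\<close>
definition schur :: "real^'n^'n \<Rightarrow> 'n set \<Rightarrow> 'n set \<Rightarrow> real^'n^'n" where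
  "schur L U C = (let F = U - C in
      restr L C C - restr L C F ** pinv (restr L F F) ** restr L F C)"

definition energy :: "real^'n^'n \<Rightarrow> real^'n \<Rightarrow> real" where
  "energy L d = d \<bullet> (pinv L *v d)"

definition laplacian_on :: "real^'n^'n \<Rightarrow> 'n set \<Rightarrow> bool" where
  "laplacian_on A U \<longleftrightarrow> transpose A = A
     \<and> (\<forall>i j. i \<noteq> j \<longrightarrow> A $ i $ j \<le> 0)
     \<and> (\<forall>i. (\<Sum>j\<in>UNIV. A $ i $ j) = 0)
     \<and> (\<forall>i j. (i \<notin> U \<or> j \<notin> U) \<longrightarrow> A $ i $ j = 0)"

definition conn_laplacian_on :: "real^'n^'n \<Rightarrow> 'n set \<Rightarrow> bool" where
  "conn_laplacian_on A U \<longleftrightarrow> laplacian_on A U \<and>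
     (\<forall>u\<in>U. \<forall>v\<in>U. (u, v) \<in> {(i, j). i \<in> U \<and> j \<in> U \<and> i \<noteq> j \<and> A $ i $ j < 0}\<^sup>*)"

text \<open>A graph with vertex type 'v and edge type 'e; each edge e has endpoints
  ends e = (tail, head), used to fix the orientation of the signed incidence matrix.\<close>
definition incidence :: "('e \<Rightarrow> 'v \<times> 'v) \<Rightarrow> real^'v^'e" where
  "incidence ends = (\<chi> e v. if v = fst (ends e) then 1 else if v = snd (ends e) then -1 else 0)"

definition graph_connected :: "('e \<Rightarrow> 'v \<times> 'v) \<Rightarrow> bool" where
  "graph_connected ends \<longleftrightarrow>
     (\<forall>u v. (u, v) \<in> {(a, b). \<exists>e. ends e = (a, b) \<or> ends e = (b, a)}\<^sup>*)"

definition wdiag :: "('e \<Rightarrow> real) \<Rightarrow> real^'e^'e" where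
  "wdiag w = (\<chi> i j. if i = j then w i else 0)"

text \<open>SLeaf EH bdH  (leaf, S(H) = {}) and  SNode EH bdH S(H) D1 D2.\<close>
datatype ('v, 'e) stree =
    SLeaf "'e set" "'v set"
  | SNode "'e set" "'v set" "'v set" "('v, 'e) stree" "('v, 'e) stree"

fun st_edges :: "('v, 'e) stree \<Rightarrow> 'e set" where
  "st_edges (SLeaf E b) = E"
| "st_edges (SNode E b S D1 D2) = E"

fun st_bd :: "('v, 'e) stree \<Rightarrow> 'v set" where
  "st_bd (SLeaf E b) = b"
| "st_bd (SNode E b S D1 D2) = b"

fun st_sep :: "('v, 'e) stree \<Rightarrow> 'v set" where
  "st_sep (SLeaf E b) = {}"
| "st_sep (SNode E b S D1 D2) = S"

definition st_verts :: "('e \<Rightarrow> 'v \<times> 'v) \<Rightarrow> ('v, 'e) stree \<Rightarrow> 'v set" where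
  "st_verts ends H = {v. \<exists>e\<in>st_edges H. v = fst (ends e) \<or> v = snd (ends e)}"

fun st_F :: "('e \<Rightarrow> 'v \<times> 'v) \<Rightarrow> ('v, 'e) stree \<Rightarrow> 'v set" where
  "st_F ends (SLeaf E b) = st_verts ends (SLeaf E b) - b"
| "st_F ends (SNode E b S D1 D2) = S - b"

fun st_level :: "('v, 'e) stree \<Rightarrow> nat" where
  "st_level (SLeaf E b) = 0"
| "st_level (SNode E b S D1 D2) = Suc (max (st_level D1) (st_level D2))"

fun st_nodes :: "('v, 'e) stree \<Rightarrow> ('v, 'e) stree set" where
  "st_nodes (SLeaf E b) = {SLeaf E b}"
| "st_nodes (SNode E b S D1 D2) = insert (SNode E b S D1 D2) (st_nodes D1 \<union> st_nodes D2)"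

fun st_wf :: "('e \<Rightarrow> 'v \<times> 'v) \<Rightarrow> ('v, 'e) stree \<Rightarrow> bool" where
  "st_wf ends (SLeaf E b) = True"
| "st_wf ends (SNode E b S D1 D2) =
     (st_edges D1 \<inter> st_edges D2 = {} \<and> st_edges D1 \<union> st_edges D2 = E
      \<and> st_verts ends D1 \<inter> st_verts ends D2 = S
      \<and> st_bd D1 = (b \<union> S) \<inter> st_verts ends D1
      \<and> st_bd D2 = (b \<union> S) \<inter> st_verts ends D2
      \<and> st_wf ends D1 \<and> st_wf ends D2)"

definition separator_tree :: "('e \<Rightarrow> 'v \<times> 'v) \<Rightarrow> ('v, 'e) stree \<Rightarrow> bool" where
  "separator_tree ends T \<longleftrightarrow> st_edges T = UNIV \<and> st_bd T = {} \<and> st_wf ends T"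

definition Bsub :: "('e \<Rightarrow> 'v \<times> 'v) \<Rightarrow> ('v, 'e) stree \<Rightarrow> real^'v^'e" where
  "Bsub ends H = (\<chi> e v. if e \<in> st_edges H then incidence ends $ e $ v else 0)"

text \<open>sct D is the given approximate Schur complement ~SC(L^(D), \<partial>D).\<close>
fun recL :: "('e::finite \<Rightarrow> 'v::finite \<times> 'v) \<Rightarrow> ('e \<Rightarrow> real) \<Rightarrow> (('v, 'e) stree \<Rightarrow> real^'v^'v)
              \<Rightarrow> ('v, 'e) stree \<Rightarrow> real^'v^'v" where
  "recL ends w sct (SLeaf E b) =
     transpose (Bsub ends (SLeaf E b)) ** wdiag w ** Bsub ends (SLeaf E b)"
| "recL ends w sct (SNode E b S D1 D2) = sct D1 + sct D2"

definition edge_op :: "('e::finite \<Rightarrow> 'v::finite \<times> 'v) \<Rightarrow> ('e \<Rightarrow> real) \<Rightarrow> (('v, 'e) stree \<Rightarrow> real^'v^'v)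
              \<Rightarrow> ('v, 'e) stree \<Rightarrow> real^'v^'v" where
  "edge_op ends w sct D = pinv (recL ends w sct D) ** sct D"

fun recM :: "('e::finite \<Rightarrow> 'v::finite \<times> 'v) \<Rightarrow> ('e \<Rightarrow> real) \<Rightarrow> (('v, 'e) stree \<Rightarrow> real^'v^'v)
              \<Rightarrow> ('v, 'e) stree \<Rightarrow> real^'v^'e" where
  "recM ends w sct (SLeaf E b) = wdiag (\<lambda>e. sqrt (w e)) ** Bsub ends (SLeaf E b)"
| "recM ends w sct (SNode E b S D1 D2) =
     recM ends w sct D1 ** edge_op ends w sct D1 + recM ends w sct D2 ** edge_op ends w sct D2"

end

theory Submission
  imports Defs
begin


definition penrose :: "real^'n^'m \<Rightarrow> real^'m^'n \<Rightarrow> bool" where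
  "penrose A X \<longleftrightarrow> A ** X ** A = A \<and> X ** A ** X = X \<and>
                    transpose (A ** X) = A ** X \<and> transpose (X ** A) = X ** A"

lemma penrose_unique:
  assumes "penrose A X" "penrose A Y" shows "X = Y"
proof -
  have a1: "A ** X ** A = A" "X ** A ** X = X" "transpose (A ** X) = A ** X" "transpose (X ** A) = X ** A"
    using assms(1) by (auto simp: penrose_def)
  have b1: "A ** Y ** A = A" "Y ** A ** Y = Y" "transpose (A ** Y) = A ** Y" "transpose (Y ** A) = Y ** A"
    using assms(2) by (auto simp: penrose_def)
  have "X = X ** (A ** X)" using a1 by (simp add: matrix_mul_assoc)
  also have "\<dots> = X ** transpose (A ** X)" using a1 by simp
  also have "\<dots> = X ** (transpose X ** transpose A)" by (simp add: matrix_transpose_mul)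
  also have "transpose A = transpose A ** transpose Y ** transpose A"
    using b1 by (metis matrix_transpose_mul matrix_mul_assoc)
  also have "X ** (transpose X ** (transpose A ** transpose Y ** transpose A))
      = X ** (transpose (A ** X) ** transpose (A ** Y))"
    by (simp add: matrix_transpose_mul matrix_mul_assoc)
  also have "\<dots> = X ** A ** X ** A ** Y" using a1 b1 by (simp add: matrix_mul_assoc)
  also have "\<dots> = X ** A ** Y" using a1 by (simp add: matrix_mul_assoc)
  finally have 1: "X = X ** A ** Y" .
  have "Y = (Y ** A) ** Y" using b1 by (simp add: matrix_mul_assoc)
  also have "\<dots> = transpose (Y ** A) ** Y" using b1 by simp
  also have "\<dots> = (transpose A ** transpose Y) ** Y" by (simp add: matrix_transpose_mul)
  also have "transpose A = transpose A ** transpose X ** transpose A"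
    using a1 by (metis matrix_transpose_mul matrix_mul_assoc)
  also have "((transpose A ** transpose X ** transpose A) ** transpose Y) ** Y
      = (transpose (X ** A) ** transpose (Y ** A)) ** Y"
    by (simp add: matrix_transpose_mul matrix_mul_assoc)
  also have "\<dots> = X ** A ** Y ** A ** Y" using a1 b1 by (simp add: matrix_mul_assoc)
  also have "\<dots> = X ** A ** Y" using b1 by (metis matrix_mul_assoc)
  finally show ?thesis using 1 by simp
qed

lemma matrix_diff_ldistrib: "(A::real^'n^'m) ** (B - C) = A ** B - A ** C"
  by (simp add: matrix_matrix_mult_def vec_eq_iff sum_subtractf algebra_simps)
lemma matrix_diff_rdistrib: "((B::real^'n^'m) - C) ** A = B ** A - C ** A"
  by (simp add: matrix_matrix_mult_def vec_eq_iff sum_subtractf algebra_simps)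
lemma matrix_add_rdistrib': "((B::real^'n^'m) + C) ** A = B ** A + C ** A"
  by (simp add: matrix_matrix_mult_def vec_eq_iff sum.distrib algebra_simps)
lemma transpose_diff: "transpose ((A::real^'n^'m) - B) = transpose A - transpose B"
  by (simp add: transpose_def vec_eq_iff)
lemma transpose_add: "transpose ((A::real^'n^'m) + B) = transpose A + transpose B"
  by (simp add: transpose_def vec_eq_iff)
lemma transpose_zero: "transpose (0::real^'n^'m) = 0"
  by (simp add: transpose_def vec_eq_iff)

lemma inner_mv_transpose: "x \<bullet> ((A::real^'n^'m) *v y) = (transpose A *v x) \<bullet> y"
  by (simp add: dot_lmul_matrix[symmetric])

lemma sym_inner: "transpose A = A \<Longrightarrow> x \<bullet> ((A::real^'n^'n) *v y) = (A *v x) \<bullet> y"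
  by (metis inner_mv_transpose)

lemma penrose_exists_sym:
  fixes A :: "real^'n^'n"
  assumes sym: "transpose A = A"
  shows "\<exists>X. penrose A X"
proof -
  define K where "K = {x::real^'n. A *v x = 0}"
  have sK: "subspace K" unfolding K_def subspace_def
    by (simp add: matrix_vector_right_distrib matrix_vector_mult_scaleR)
  obtain Bs where Bs: "Bs \<subseteq> K" "pairwise orthogonal Bs" "\<And>x. x \<in> Bs \<Longrightarrow> norm x = 1"
      "independent Bs" "span Bs = K"
    using orthonormal_basis_subspace[OF sK] by metis
  have fin: "finite Bs" using Bs(4) independent_imp_finite by blast
  define Q :: "real^'n^'n" where "Q = (\<chi> i j. \<Sum>b\<in>Bs. b$i * b$j)"
  have Qv: "Q *v x = (\<Sum>b\<in>Bs. (x \<bullet> b) *\<^sub>R b)" for x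
    unfolding Q_def
    by (simp add: vec_eq_iff matrix_vector_mult_def inner_vec_def sum_component
        sum_distrib_left sum_distrib_right mult_ac sum.swap[of _ Bs])
  have Qt: "transpose Q = Q" unfolding Q_def transpose_def by (simp add: vec_eq_iff mult.commute)
  have QK: "Q *v x \<in> K" for x
    unfolding Qv by (metis (no_types, lifting) Bs(5) span_base span_scale span_sum)
  have QKid: "x \<in> K \<Longrightarrow> Q *v x = x" for x
    unfolding Qv using orthonormal_basis_expand[OF Bs(2) Bs(3) _ fin] Bs(5) by auto
  have AQ: "A ** Q = 0"
    by (simp add: matrix_eq matrix_vector_mul_assoc[symmetric]) (use QK K_def in auto)
  have QQ: "Q ** Q = Q"
    by (simp add: matrix_eq matrix_vector_mul_assoc[symmetric] QK QKid)
  have QA: "Q ** A = 0"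
    by (metis AQ Qt sym matrix_transpose_mul transpose_zero transpose_transpose)
  define B where "B = A + Q"
  have "inj ((*v) B)"
  proof (rule injI)
    fix x y assume "B *v x = B *v y"
    then have e: "B *v (x - y) = 0" by (simp add: matrix_vector_mult_diff_distrib)
    define u where "u = x - y"
    have Au: "A *v u = - (Q *v u)" using e unfolding u_def B_def
      by (simp add: matrix_vector_mult_add_rdistrib eq_neg_iff_add_eq_0)
    then have "A *v u \<in> K" using QK[of u] sK by (simp add: subspace_neg)
    then have "A *v (A *v u) = 0" by (simp add: K_def)
    then have "(A *v u) \<bullet> (A *v u) = 0" using sym_inner[OF sym, of u "A *v u"] by simp
    then have "A *v u = 0" by simp
    then have "u \<in> K" "Q *v u = 0" using Au by (auto simp: K_def)
    then have "u = 0" using QKid by metis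
    then show "x = y" by (simp add: u_def)
  qed
  then obtain B' where B'1: "B' ** B = mat 1" using matrix_left_invertible_injective by blast
  then have B'2: "B ** B' = mat 1" using matrix_left_right_inverse by blast
  have BQ: "B ** Q = Q" unfolding B_def by (simp add: matrix_add_rdistrib' AQ QQ)
  have QB: "Q ** B = Q" unfolding B_def by (simp add: matrix_add_ldistrib QA QQ)
  have B'Q: "B' ** Q = Q" by (metis BQ B'1 matrix_mul_assoc matrix_mul_lid)
  have QB': "Q ** B' = Q" by (metis QB B'2 matrix_mul_assoc matrix_mul_rid)
  have AB: "A = B - Q" by (simp add: B_def)
  define X where "X = B' - Q"
  have AX: "A ** X = mat 1 - Q" unfolding X_def AB
    by (simp add: matrix_diff_ldistrib matrix_diff_rdistrib B'2 BQ QB' QQ)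
  have XA: "X ** A = mat 1 - Q" unfolding X_def AB
    by (simp add: matrix_diff_ldistrib matrix_diff_rdistrib B'1 B'Q QB QQ)
  have "A ** X ** A = A" unfolding AX by (simp add: matrix_diff_rdistrib QA)
  moreover have "X ** A ** X = X" unfolding XA
    by (simp add: matrix_diff_rdistrib X_def matrix_diff_ldistrib QB' QQ)
  moreover have "transpose (A ** X) = A ** X" unfolding AX by (simp add: transpose_diff Qt)
  moreover have "transpose (X ** A) = X ** A" unfolding XA by (simp add: transpose_diff Qt)
  ultimately show ?thesis unfolding penrose_def by blast
qed

lemma pinv_penrose:
  fixes A :: "real^'n^'n"
  assumes "transpose A = A" shows "penrose A (pinv A)"
proof -
  have "\<exists>!X. penrose A X" using penrose_exists_sym[OF assms] penrose_unique by blast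
  then show ?thesis unfolding pinv_def penrose_def[symmetric] by (rule theI')
qed

lemma pinv_sym:
  fixes A :: "real^'n^'n"
  assumes s: "transpose A = A" shows "transpose (pinv A) = pinv A"
proof -
  let ?X = "pinv A"
  have p: "penrose A ?X" by (rule pinv_penrose[OF s])
  have "penrose A (transpose ?X)"
    using p unfolding penrose_def
    by (metis matrix_transpose_mul s transpose_transpose matrix_mul_assoc)
  then show ?thesis using p penrose_unique by blast
qed

lemma pinv_comm:
  fixes A :: "real^'n^'n"
  assumes s: "transpose A = A" shows "A ** pinv A = pinv A ** A"
  using pinv_penrose[OF s] pinv_sym[OF s] unfolding penrose_def
  by (metis matrix_transpose_mul s)




lemma lap_psd:
  fixes A :: "real^'n^'n"
  assumes s: "transpose A = A" and off: "\<forall>i j. i \<noteq> j \<longrightarrow> A$i$j \<le> 0"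
    and rs: "\<forall>i. (\<Sum>j\<in>UNIV. A$i$j) = 0"
  shows "0 \<le> x \<bullet> (A *v x)"
proof -
  have sij: "A$j$i = A$i$j" for i j using s by (metis transpose_def vec_lambda_beta)
  have q: "x \<bullet> (A *v x) = (\<Sum>i\<in>UNIV. \<Sum>j\<in>UNIV. A$i$j * x$i * x$j)"
    by (simp add: inner_vec_def matrix_vector_mult_def sum_distrib_left mult_ac)
  have t1: "(\<Sum>i\<in>UNIV. \<Sum>j\<in>UNIV. A$i$j * (x$i)^2) = 0"
    by (simp add: sum_distrib_right[symmetric] rs)
  have t3: "(\<Sum>i\<in>UNIV. \<Sum>j\<in>UNIV. A$i$j * (x$j)^2) = 0"
    apply (subst sum.swap)
    by (simp add: sij sum_distrib_right[symmetric] rs)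
  have "(\<Sum>i\<in>UNIV. \<Sum>j\<in>UNIV. A$i$j * (x$i - x$j)^2)
      = (\<Sum>i\<in>UNIV. \<Sum>j\<in>UNIV. A$i$j * (x$i)^2) - 2 * (\<Sum>i\<in>UNIV. \<Sum>j\<in>UNIV. A$i$j * x$i * x$j)
        + (\<Sum>i\<in>UNIV. \<Sum>j\<in>UNIV. A$i$j * (x$j)^2)"
    by (simp add: power2_diff algebra_simps sum.distrib sum_subtractf sum_distrib_left)
  then have e: "(\<Sum>i\<in>UNIV. \<Sum>j\<in>UNIV. A$i$j * (x$i - x$j)^2) = - 2 * (x \<bullet> (A *v x))"
    using t1 t3 q by simp
  have "(\<Sum>i\<in>UNIV. \<Sum>j\<in>UNIV. A$i$j * (x$i - x$j)^2) \<le> 0"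
    by (rule sum_nonpos, rule sum_nonpos) (metis off mult_nonpos_nonneg zero_le_power2 diff_self power2_eq_square mult_zero_right order_refl)
  then show ?thesis using e by simp
qed

lemma lap_sym: "laplacian_on A U \<Longrightarrow> transpose A = A" by (simp add: laplacian_on_def)
lemma lap_psd': "laplacian_on A U \<Longrightarrow> 0 \<le> x \<bullet> (A *v x)"
  unfolding laplacian_on_def using lap_psd by blast

definition pr :: "'n set \<Rightarrow> real^'n \<Rightarrow> real^'n" where
  "pr S v = (\<chi> i. if i \<in> S then v$i else 0)"

lemma restr_mv: "restr L R C *v v = pr R (L *v pr C v)"
  unfolding vec_eq_iff
proof
  fix i show "(restr L R C *v v)$i = pr R (L *v pr C v) $ i"
    by (cases "i \<in> R") (auto simp add: restr_def pr_def matrix_vector_mult_def intro!: sum.cong)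
qed

lemma pr_inner: "pr S a \<bullet> b = a \<bullet> pr S b"
  unfolding inner_vec_def pr_def by (rule sum.cong) auto

lemma pr_pr[simp]: "pr S (pr S v) = pr S v" by (simp add: pr_def vec_eq_iff)

lemma transpose_restr: "transpose L = L \<Longrightarrow> transpose (restr L S S) = restr L S S"
  unfolding restr_def transpose_def by (simp add: vec_eq_iff)

lemma scaleR_mv: "((c::real) *\<^sub>R A) *v x = c *\<^sub>R (A *v (x::real^'n))"
  unfolding vec_eq_iff matrix_vector_mult_def
  by (simp add: sum_distrib_left mult.assoc)

lemma schur_le:
  fixes L :: "real^'n^'n"
  assumes s: "transpose L = L" and psd: "\<forall>x. 0 \<le> x \<bullet> (L *v x)"
    and supp: "\<forall>i j. (i \<notin> U \<or> j \<notin> U) \<longrightarrow> L$i$j = 0"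
  shows "x \<bullet> (schur L U C *v x) \<le> x \<bullet> (L *v x)"
proof -
  define F where "F = U - C"
  define A where "A = restr L F F"
  define X where "X = pinv A"
  define c where "c = pr C x"
  define f where "f = pr F x"
  define b where "b = pr F (L *v c)"
  have As: "transpose A = A" unfolding A_def by (rule transpose_restr[OF s])
  have Av: "A *v v = pr F (L *v pr F v)" for v unfolding A_def by (simp add: restr_mv)
  have pX: "penrose A X" unfolding X_def by (rule pinv_penrose[OF As])
  have cm: "A ** X = X ** A" unfolding X_def by (rule pinv_comm[OF As])
  have Lsym: "u \<bullet> (L *v v) = (L *v u) \<bullet> v" for u v by (rule sym_inner[OF s])
  have Asym: "u \<bullet> (A *v v) = (A *v u) \<bullet> v" for u v by (rule sym_inner[OF As])
  have sc: "schur L U C *v x = restr L C C *v x - restr L C F *v (X *v (restr L F C *v x))"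
    unfolding schur_def Let_def F_def A_def X_def matrix_vector_mult_diff_rdistrib
    by (metis matrix_vector_mul_assoc)
  have s1: "x \<bullet> (schur L U C *v x) = c \<bullet> (L *v c) - b \<bullet> (X *v b)"
  proof -
    have "x \<bullet> (restr L C C *v x) = c \<bullet> (L *v c)"
      by (simp add: restr_mv c_def pr_inner[symmetric])
    moreover have "x \<bullet> (restr L C F *v u) = b \<bullet> u" for u
    proof -
      have "x \<bullet> (restr L C F *v u) = c \<bullet> (L *v pr F u)"
        by (simp add: restr_mv c_def pr_inner[symmetric])
      also have "\<dots> = b \<bullet> u" by (simp add: Lsym b_def pr_inner)
      finally show ?thesis .
    qed
    moreover have "restr L F C *v x = b" by (simp add: restr_mv b_def c_def)
    ultimately show ?thesis by (simp add: sc inner_diff_right)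
  qed
  have Lg: "L *v x = L *v c + L *v f"
  proof -
    have h: "L *v (x - c - f) = 0"
      unfolding c_def f_def F_def
      by (auto simp: vec_eq_iff matrix_vector_mult_def pr_def supp intro!: sum.neutral)
    have "L *v x = L *v (x - c - f) + L *v c + L *v f" by (simp add: matrix_vector_mult_diff_distrib)
    then show ?thesis using h by simp
  qed
  have s2: "x \<bullet> (L *v x) = c \<bullet> (L *v c) + 2 * (b \<bullet> x) + x \<bullet> (A *v x)"
  proof -
    have "x \<bullet> (L *v x) = (L *v x) \<bullet> x" by (simp add: inner_commute)
    also have "\<dots> = (L *v c) \<bullet> x + (L *v f) \<bullet> x" by (simp add: Lg inner_add_left)
    also have "(L *v c) \<bullet> x = c \<bullet> (L *v x)" by (simp add: Lsym)
    also have "(L *v f) \<bullet> x = f \<bullet> (L *v x)" by (simp add: Lsym)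
    also have "c \<bullet> (L *v x) + f \<bullet> (L *v x) = c \<bullet> (L *v c) + c \<bullet> (L *v f) + (f \<bullet> (L *v c) + f \<bullet> (L *v f))"
      by (simp add: Lg inner_add_right)
    also have "c \<bullet> (L *v f) = b \<bullet> x"
      by (simp add: Lsym b_def f_def pr_inner)
    also have "f \<bullet> (L *v c) = b \<bullet> x"
      by (metis b_def f_def pr_inner inner_commute)
    also have "f \<bullet> (L *v f) = x \<bullet> (A *v x)"
      by (simp add: Av f_def pr_inner)
    finally show ?thesis by simp
  qed
  define r where "r = b - A *v (X *v b)"
  have AXA: "A ** X ** A = A" using pX by (simp add: penrose_def)
  have Ar: "A *v r = 0"
  proof -
    have "A *v (A *v (X *v b)) = ((A ** X) ** A) *v b"
      by (simp add: matrix_vector_mul_assoc cm matrix_mul_assoc)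
    then show ?thesis using AXA by (simp add: r_def matrix_vector_mult_diff_distrib)
  qed
  have rr: "r \<bullet> r = r \<bullet> b"
  proof -
    have "r \<bullet> (A *v (X *v b)) = 0" by (simp add: Asym Ar)
    then show ?thesis by (simp add: r_def inner_diff_right)
  qed
  have prr: "pr F r = r"
    by (simp add: r_def b_def Av vec_eq_iff pr_def)
  have r0: "r = 0"
  proof (rule ccontr)
    assume "r \<noteq> 0"
    then have rp: "r \<bullet> r > 0" by simp
    have gen: "0 \<le> c \<bullet> (L *v c) + 2 * t * (r \<bullet> r)" for t
    proof -
      have "0 \<le> (c + t *\<^sub>R r) \<bullet> (L *v (c + t *\<^sub>R r))" using psd by blast
      also have "\<dots> = c \<bullet> (L *v c) + 2 * t * ((L *v c) \<bullet> r) + t * t * (r \<bullet> (L *v r))"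
        by (simp add: matrix_vector_right_distrib matrix_vector_mult_scaleR inner_add_left
            inner_add_right Lsym[of r c] algebra_simps inner_commute)
      also have "(L *v c) \<bullet> r = r \<bullet> r"
        by (metis rr prr pr_inner b_def inner_commute)
      also have "r \<bullet> (L *v r) = 0"
        by (metis Ar Av prr pr_inner inner_zero_right)
      finally show ?thesis by simp
    qed
    define t where "t = - (\<bar>c \<bullet> (L *v c)\<bar> + 1) / (2 * (r \<bullet> r))"
    have "2 * t * (r \<bullet> r) = - (\<bar>c \<bullet> (L *v c)\<bar> + 1)" using rp by (simp add: t_def)
    then show False using gen[of t] by linarith
  qed
  then have bAX: "A *v (X *v b) = b" by (simp add: r_def)
  have hx: "(A *v x) \<bullet> (X *v b) = b \<bullet> x"
    by (metis Asym bAX inner_commute)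
  have "0 \<le> (x + X *v b) \<bullet> (A *v (x + X *v b))"
    by (simp add: Av pr_inner[symmetric]) (metis psd)
  also have "\<dots> = x \<bullet> (A *v x) + 2 * (b \<bullet> x) + b \<bullet> (X *v b)"
    by (simp add: matrix_vector_right_distrib inner_add_left inner_add_right bAX
        Asym[of "X *v b" x] hx inner_commute)
  finally show ?thesis using s1 s2 by simp
qed

lemma key:
  fixes L S SC :: "real^'n^'n"
  assumes s: "transpose L = L" and S: "transpose S = S" and Spsd: "\<forall>x. 0 \<le> x \<bullet> (S *v x)"
    and a1: "\<forall>x. exp (-\<epsilon>) * (x \<bullet> (S *v x)) \<le> x \<bullet> (SC *v x)"
    and a2: "\<forall>x. x \<bullet> (SC *v x) \<le> x \<bullet> (L *v x)"
  shows "(pinv L *v (S *v z)) \<bullet> (L *v (pinv L *v (S *v z))) \<le> exp \<epsilon> * (z \<bullet> (S *v z))"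
proof -
  define X where "X = pinv L"
  define y where "y = S *v z"
  define x where "x = X *v y"
  have pX: "penrose L X" unfolding X_def by (rule pinv_penrose[OF s])
  have Xs: "transpose X = X" unfolding X_def by (rule pinv_sym[OF s])
  have XLX: "X ** L ** X = X" using pX by (simp add: penrose_def)
  have q: "x \<bullet> (L *v x) = y \<bullet> x"
  proof -
    have "x \<bullet> (L *v x) = y \<bullet> (X *v (L *v (X *v y)))"
      by (simp add: x_def sym_inner[OF Xs] inner_commute)
    also have "X *v (L *v (X *v y)) = X *v y"
      using XLX by (simp only: matrix_vector_mul_assoc matrix_mul_assoc)
    finally show ?thesis by (simp add: x_def)
  qed
  have yx: "y \<bullet> x = z \<bullet> (S *v x)" by (simp add: y_def sym_inner[OF S])
  have "x \<bullet> (L *v x) = 2 * (y \<bullet> x) - x \<bullet> (L *v x)" using q by simp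
  also have "\<dots> \<le> 2 * (z \<bullet> (S *v x)) - exp (-\<epsilon>) * (x \<bullet> (S *v x))"
    using a1 a2 yx by (smt (verit))
  also have "\<dots> \<le> exp \<epsilon> * (z \<bullet> (S *v z))"
  proof -
    have "0 \<le> (x - exp \<epsilon> *\<^sub>R z) \<bullet> (S *v (x - exp \<epsilon> *\<^sub>R z))" using Spsd by blast
    also have "\<dots> = x \<bullet> (S *v x) - 2 * exp \<epsilon> * (z \<bullet> (S *v x)) + exp \<epsilon> * exp \<epsilon> * (z \<bullet> (S *v z))"
      by (simp add: matrix_vector_mult_diff_distrib matrix_vector_mult_scaleR inner_diff_left
          inner_diff_right sym_inner[OF S, of x z] algebra_simps inner_commute)
    finally have h: "0 \<le> x \<bullet> (S *v x) - 2 * exp \<epsilon> * (z \<bullet> (S *v x)) + exp \<epsilon> * exp \<epsilon> * (z \<bullet> (S *v z))" .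
    have "0 \<le> exp (-\<epsilon>) * (x \<bullet> (S *v x) - 2 * exp \<epsilon> * (z \<bullet> (S *v x)) + exp \<epsilon> * exp \<epsilon> * (z \<bullet> (S *v z)))"
      using h by simp
    also have "\<dots> = exp (-\<epsilon>) * (x \<bullet> (S *v x)) - 2 * (exp (-\<epsilon>) * exp \<epsilon>) * (z \<bullet> (S *v x)) + (exp (-\<epsilon>) * exp \<epsilon>) * exp \<epsilon> * (z \<bullet> (S *v z))"
      by (simp add: algebra_simps)
    also have "exp (-\<epsilon>) * exp \<epsilon> = 1" by (simp add: exp_minus)
    finally show ?thesis by simp
  qed
  finally show ?thesis by (simp add: x_def y_def X_def)
qed




lemma nodes_self: "H \<in> st_nodes H" by (cases H) auto
lemma nodes_trans: "H \<in> st_nodes T \<Longrightarrow> st_nodes H \<subseteq> st_nodes T"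
  by (induction T) auto
lemma nodes_wf: "st_wf ends T \<Longrightarrow> H \<in> st_nodes T \<Longrightarrow> st_wf ends H"
  by (induction T) auto
lemma nodes_size: "H \<in> st_nodes T \<Longrightarrow> size H \<le> size T"
  by (induction T) auto

lemma recM_supp: "st_wf ends H \<Longrightarrow> e \<notin> st_edges H \<Longrightarrow> recM ends w sct H $ e = 0"
proof (induction H)
  case (SLeaf E b)
  then show ?case
    by (auto simp: vec_eq_iff matrix_matrix_mult_def wdiag_def Bsub_def intro!: sum.neutral)
next
  case (SNode E b S D1 D2)
  then have "recM ends w sct D1 $ e = 0" "recM ends w sct D2 $ e = 0" by auto
  then show ?case by (simp add: vec_eq_iff matrix_matrix_mult_def)
qed

lemma recM_mv_supp: "st_wf ends H \<Longrightarrow> e \<notin> st_edges H \<Longrightarrow> (recM ends w sct H *v x) $ e = 0"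
  using recM_supp[of ends H e w sct] by (simp add: matrix_vector_mult_def)

lemma wdiag_mv: "wdiag f *v y = (\<chi> e. f e * y$e)"
  unfolding vec_eq_iff matrix_vector_mult_def wdiag_def
  by (auto simp: if_distrib[of "\<lambda>t. t * _"] cong: if_cong)

lemma leaf_eq:
  assumes wpos: "\<forall>e. w e > 0"
  shows "(norm (recM ends w sct (SLeaf E b) *v z))\<^sup>2 = z \<bullet> (recL ends w sct (SLeaf E b) *v z)"
proof -
  define B where "B = Bsub ends (SLeaf E b)"
  define y where "y = B *v z"
  have "recM ends w sct (SLeaf E b) *v z = (\<chi> e. sqrt (w e) * y$e)"
    by (simp add: B_def y_def matrix_vector_mul_assoc[symmetric] wdiag_mv)
  then have l: "(norm (recM ends w sct (SLeaf E b) *v z))\<^sup>2 = (\<Sum>e\<in>UNIV. (sqrt (w e) * y$e)^2)"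
    unfolding power2_norm_eq_inner by (simp add: inner_vec_def power2_eq_square)
  have "recL ends w sct (SLeaf E b) *v z = transpose B *v (wdiag w *v y)"
    by (simp add: B_def y_def matrix_vector_mul_assoc matrix_mul_assoc)
  then have "z \<bullet> (recL ends w sct (SLeaf E b) *v z) = z \<bullet> (transpose B *v (wdiag w *v y))"
    by simp
  also have "\<dots> = y \<bullet> (wdiag w *v y)"
    by (metis inner_mv_transpose transpose_transpose y_def)
  also have "\<dots> = (\<Sum>e\<in>UNIV. w e * (y$e)^2)"
    by (simp add: wdiag_mv inner_vec_def power2_eq_square mult_ac)
  also have "\<dots> = (\<Sum>e\<in>UNIV. (sqrt (w e) * y$e)^2)"
    using wpos by (simp add: power_mult_distrib less_imp_le)
  finally show ?thesis using l by simp
qed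

lemma energy_eq:
  fixes L :: "real^'n^'n"
  assumes s: "transpose L = L"
  shows "z \<bullet> (L *v z) = energy L (L *v z)"
proof -
  have p: "L ** pinv L ** L = L" using pinv_penrose[OF s] by (simp add: penrose_def)
  have "energy L (L *v z) = z \<bullet> (L *v (pinv L *v (L *v z)))"
    unfolding energy_def by (simp add: sym_inner[OF s])
  also have "L *v (pinv L *v (L *v z)) = L *v z"
    using p by (simp only: matrix_vector_mul_assoc matrix_mul_assoc)
  finally show ?thesis by simp
qed

lemma qscale: "x \<bullet> (((c::real) *\<^sub>R A) *v x) = c * (x \<bullet> (A *v (x::real^'n)))"
  by (simp add: scaleR_mv)




lemma child_bound:
  fixes L S :: "real^'n^'n"
  assumes Llap: "laplacian_on L U" and Slap: "laplacian_on S C"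
    and ap: "spec_approx S \<epsilon> (schur L U C)"
    and IH: "\<forall>z. (norm (M *v z))\<^sup>2 \<le> exp (real k * \<epsilon>) * (z \<bullet> (L *v z))"
    and lev: "k < n"
  shows "(norm (M *v (pinv L *v (S *v z))))\<^sup>2 \<le> exp (real n * \<epsilon>) * (z \<bullet> (S *v z))"
proof -
  define x where "x = pinv L *v (S *v z)"
  have Ls: "transpose L = L" using Llap by (simp add: laplacian_on_def)
  have Ss: "transpose S = S" using Slap by (simp add: laplacian_on_def)
  have Lp: "\<forall>x. 0 \<le> x \<bullet> (L *v x)" using lap_psd'[OF Llap] by blast
  have Sp: "\<forall>x. 0 \<le> x \<bullet> (S *v x)" using lap_psd'[OF Slap] by blast
  have supp: "\<forall>i j. (i \<notin> U \<or> j \<notin> U) \<longrightarrow> L$i$j = 0" using Llap by (simp add: laplacian_on_def)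
  have a1: "\<forall>x. exp (-\<epsilon>) * (x \<bullet> (S *v x)) \<le> x \<bullet> (schur L U C *v x)"
    using ap by (simp add: spec_approx_def loewner_le_def qscale)
  have a1': "\<forall>x. x \<bullet> (schur L U C *v x) \<le> exp \<epsilon> * (x \<bullet> (S *v x))"
    using ap by (simp add: spec_approx_def loewner_le_def qscale)
  have a2: "\<forall>x. x \<bullet> (schur L U C *v x) \<le> x \<bullet> (L *v x)"
    using schur_le[OF Ls Lp supp] by blast
  have kx: "x \<bullet> (L *v x) \<le> exp \<epsilon> * (z \<bullet> (S *v z))"
    unfolding x_def by (rule key[OF Ls Ss Sp a1 a2])
  have nx: "(norm (M *v x))\<^sup>2 \<le> exp (real k * \<epsilon>) * (x \<bullet> (L *v x))" using IH by blast
  have qx: "0 \<le> x \<bullet> (L *v x)" using Lp by blast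
  have qz: "0 \<le> z \<bullet> (S *v z)" using Sp by blast
  show ?thesis
  proof (cases "\<epsilon> \<ge> 0")
    case True
    have "(norm (M *v x))\<^sup>2 \<le> exp (real k * \<epsilon>) * (exp \<epsilon> * (z \<bullet> (S *v z)))"
      using nx kx by (smt (verit) exp_gt_zero mult_left_mono)
    also have "\<dots> = exp (real (Suc k) * \<epsilon>) * (z \<bullet> (S *v z))"
      by (simp add: distrib_right exp_add)
    also have "\<dots> \<le> exp (real n * \<epsilon>) * (z \<bullet> (S *v z))"
    proof (rule mult_right_mono[OF _ qz])
      have "real (Suc k) * \<epsilon> \<le> real n * \<epsilon>" using lev True by (intro mult_right_mono) auto
      then show "exp (real (Suc k) * \<epsilon>) \<le> exp (real n * \<epsilon>)" by simp
    qed
    finally show ?thesis by (simp add: x_def)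
  next
    case False
    have "exp \<epsilon> < exp (-\<epsilon>)" using False by simp
    moreover have "exp (-\<epsilon>) * (z \<bullet> (S *v z)) \<le> exp \<epsilon> * (z \<bullet> (S *v z))"
      using a1 a1' by (meson order_trans)
    ultimately have "z \<bullet> (S *v z) \<le> 0" using qz
      by (smt (verit) mult_strict_right_mono)
    then have "z \<bullet> (S *v z) = 0" using qz by simp
    then have "x \<bullet> (L *v x) = 0" using kx qx by simp
    then have "(norm (M *v x))\<^sup>2 \<le> 0" using nx by simp
    then show ?thesis using \<open>z \<bullet> (S *v z) = 0\<close> by (simp add: x_def)
  qed
qed

lemma main_ind:
  fixes ends :: "'e::finite \<Rightarrow> 'v::finite \<times> 'v"
  assumes wpos: "\<forall>e. w e > 0"
    and tree: "separator_tree ends T"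
    and sct_lap: "\<forall>D\<in>st_nodes T. laplacian_on (sct D) (st_bd D)"
    and L_conn: "\<forall>H\<in>st_nodes T. conn_laplacian_on (recL ends w sct H) (st_bd H \<union> st_F ends H)"
    and approx: "\<forall>D\<in>st_nodes T - {T}.
        spec_approx (sct D) \<epsilon> (schur (recL ends w sct D) (st_bd D \<union> st_F ends D) (st_bd D))"
  shows "H \<in> st_nodes T \<Longrightarrow> \<forall>z. (norm (recM ends w sct H *v z))\<^sup>2
           \<le> exp (real (st_level H) * \<epsilon>) * (z \<bullet> (recL ends w sct H *v z))"
proof (induction H)
  case (SLeaf E b)
  show ?case using leaf_eq[OF wpos, of ends sct E b] by (simp del: recM.simps recL.simps)
next
  case (SNode E b S D1 D2)
  let ?H = "SNode E b S D1 D2"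
  have wfT: "st_wf ends T" using tree by (simp add: separator_tree_def)
  have wfH: "st_wf ends ?H" using nodes_wf[OF wfT SNode.prems] .
  have sub: "st_nodes ?H \<subseteq> st_nodes T" using nodes_trans[OF SNode.prems] .
  have D1: "D1 \<in> st_nodes T" "D2 \<in> st_nodes T" using sub nodes_self by auto
  have szH: "size ?H \<le> size T" using nodes_size[OF SNode.prems] .
  have ne: "D1 \<noteq> T" "D2 \<noteq> T" using szH by auto
  note IH1 = SNode.IH(1)[OF D1(1)] and IH2 = SNode.IH(2)[OF D1(2)]
  have cb: "(norm (recM ends w sct D *v (pinv (recL ends w sct D) *v (sct D *v z))))\<^sup>2
      \<le> exp (real (st_level ?H) * \<epsilon>) * (z \<bullet> (sct D *v z))"
    if D: "D \<in> st_nodes T" "D \<noteq> T" "st_level D < st_level ?H"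
      and IHD: "\<forall>z. (norm (recM ends w sct D *v z))\<^sup>2
           \<le> exp (real (st_level D) * \<epsilon>) * (z \<bullet> (recL ends w sct D *v z))" for D z
  proof (rule child_bound[where U="st_bd D \<union> st_F ends D" and C="st_bd D", OF _ _ _ IHD D(3)])
    show "laplacian_on (recL ends w sct D) (st_bd D \<union> st_F ends D)"
      using L_conn D(1) by (simp add: conn_laplacian_on_def)
    show "laplacian_on (sct D) (st_bd D)" using sct_lap D(1) by simp
    show "spec_approx (sct D) \<epsilon> (schur (recL ends w sct D) (st_bd D \<union> st_F ends D) (st_bd D))"
      using approx D by simp
  qed
  show ?case
  proof
    fix z
    define a where "a = recM ends w sct D1 *v (pinv (recL ends w sct D1) *v (sct D1 *v z))"
    define c where "c = recM ends w sct D2 *v (pinv (recL ends w sct D2) *v (sct D2 *v z))"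
    have Mz: "recM ends w sct ?H *v z = a + c"
      by (simp add: a_def c_def edge_op_def matrix_vector_mult_add_rdistrib matrix_vector_mul_assoc)
    have wf1: "st_wf ends D1" "st_wf ends D2" using wfH by auto
    have disj: "st_edges D1 \<inter> st_edges D2 = {}" using wfH by simp
    have "a \<bullet> c = 0"
      unfolding inner_vec_def
    proof (rule sum.neutral, rule ballI)
      fix e :: 'e
      show "(a $ e) \<bullet> (c $ e) = 0"
      proof (cases "e \<in> st_edges D1")
        case True
        then have "e \<notin> st_edges D2" using disj by blast
        then show ?thesis unfolding c_def using recM_mv_supp[OF wf1(2)] by simp
      next
        case False
        then show ?thesis unfolding a_def using recM_mv_supp[OF wf1(1)] by simp
      qed
    qed
    then have "(norm (a + c))\<^sup>2 = (norm a)\<^sup>2 + (norm c)\<^sup>2"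
      by (simp add: norm_add_Pythagorean orthogonal_def)
    also have "\<dots> \<le> exp (real (st_level ?H) * \<epsilon>) * (z \<bullet> (sct D1 *v z))
                   + exp (real (st_level ?H) * \<epsilon>) * (z \<bullet> (sct D2 *v z))"
      unfolding a_def c_def
      by (intro add_mono cb D1 ne IH1 IH2) auto
    also have "\<dots> = exp (real (st_level ?H) * \<epsilon>) * (z \<bullet> (recL ends w sct ?H *v z))"
      by (simp add: matrix_vector_mult_add_rdistrib inner_add_right distrib_left)
    finally show "(norm (recM ends w sct ?H *v z))\<^sup>2
           \<le> exp (real (st_level ?H) * \<epsilon>) * (z \<bullet> (recL ends w sct ?H *v z))"
      using Mz by simp
  qed
qed


theorem mainTheorem12:
  fixes ends :: "'e::finite \<Rightarrow> 'v::finite \<times> 'v"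
    and w :: "'e \<Rightarrow> real"
    and T :: "('v, 'e) stree"
    and sct :: "('v, 'e) stree \<Rightarrow> real^'v^'v"
    and \<epsilon> :: real
  assumes loopless: "\<forall>e. fst (ends e) \<noteq> snd (ends e)"
    and conn: "graph_connected ends"
    and wpos: "\<forall>e. w e > 0"
    and tree: "separator_tree ends T"
    and sct_lap: "\<forall>D\<in>st_nodes T. laplacian_on (sct D) (st_bd D)"
    and L_conn: "\<forall>H\<in>st_nodes T. conn_laplacian_on (recL ends w sct H) (st_bd H \<union> st_F ends H)"
    and approx: "\<forall>D\<in>st_nodes T - {T}.
        spec_approx (sct D) \<epsilon> (schur (recL ends w sct D) (st_bd D \<union> st_F ends D) (st_bd D))"
    and H: "H \<in> st_nodes T"
  shows "(norm (recM ends w sct H *v z))\<^sup>2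
           \<le> exp (real (st_level H) * \<epsilon>) * (z \<bullet> (recL ends w sct H *v z))
         \<and> z \<bullet> (recL ends w sct H *v z)
           = energy (recL ends w sct H) (recL ends w sct H *v z)"
  proof
  show "(norm (recM ends w sct H *v z))\<^sup>2
           \<le> exp (real (st_level H) * \<epsilon>) * (z \<bullet> (recL ends w sct H *v z))"
    using main_ind[OF wpos tree sct_lap L_conn approx H] by blast
  have "laplacian_on (recL ends w sct H) (st_bd H \<union> st_F ends H)"
    using L_conn H by (simp add: conn_laplacian_on_def)
  then show "z \<bullet> (recL ends w sct H *v z)
           = energy (recL ends w sct H) (recL ends w sct H *v z)"
    by (intro energy_eq) (simp add: laplacian_on_def)
qed

end
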